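(* Let $\Phi(\mathbf{x})=\sum_{v\in V}\mathbf{x}_v^2$. For every $\mathbf{x}\in\Delta_n$ we have $\Phi(g(\mathbf{x}))\ge\Phi(\mathbf{x})$, with equality only if $\mathbf{x}$ is a fixed point of $g$. Consequently, for every starting point $\mathbf{x}^{(0)}\in\Delta_n$, every limit point of the trajectory $\mathbf{x}^{(t)}=g^t(\mathbf{x}^{(0)})$ is a fixed point of $g$.
   Context: $G=(V,E)$ is a finite undirected graph with $n$ vertices, $N_u$ the neighbourhood of $u$, $\Delta_n=\{\mathbf{x}\in\mathbb{R}^n_{\ge 0}:\sum_v\mathbf{x}_v=1\}$. For every edge $uv\in E$, $F_{uv}=F_{vu}:[-1,1]\to[-1,1]$ is continuously differentiable, $F_{uv}(0)=0$, increasing and odd. The map $g:\Delta_n\to\Delta_n$ is $g(\mathbf{x})_u=\mathbf{x}_u+\sum_{v\in N_u}\mathbf{x}_u\mathbf{x}_vF_{uv}(\mathbf{x}_u-\mathbf{x}_v)$; a fixed point is $\mathbf{p}$ with $g(\mathbf{p})=\mathbf{p}$. *)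

theory Defs
  imports "HOL-Analysis.Analysis"
begin

text \<open>Vertices are the elements of a finite type 'v (so n = CARD('v)); the graph is given by a
symmetric irreflexive edge relation E; points of R^n are functions 'v \<Rightarrow> real.\<close>

definition std_simplex :: "('v::finite \<Rightarrow> real) set" where
  "std_simplex = {x. (\<forall>v. 0 \<le> x v) \<and> (\<Sum>v\<in>UNIV. x v) = 1}"

definition nbhd :: "('v \<Rightarrow> 'v \<Rightarrow> bool) \<Rightarrow> 'v \<Rightarrow> 'v set" where
  "nbhd E u = {v. E u v}"

definition gmap :: "('v::finite \<Rightarrow> 'v \<Rightarrow> bool) \<Rightarrow> ('v \<Rightarrow> 'v \<Rightarrow> real \<Rightarrow> real)
                     \<Rightarrow> ('v \<Rightarrow> real) \<Rightarrow> ('v \<Rightarrow> real)" where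
  "gmap E F x = (\<lambda>u. x u + (\<Sum>v\<in>nbhd E u. x u * x v * F u v (x u - x v)))"

definition Phi :: "('v::finite \<Rightarrow> real) \<Rightarrow> real" where
  "Phi x = (\<Sum>v\<in>UNIV. (x v)\<^sup>2)"

definition admissible :: "('v \<Rightarrow> 'v \<Rightarrow> bool) \<Rightarrow> ('v \<Rightarrow> 'v \<Rightarrow> real \<Rightarrow> real) \<Rightarrow> bool" where
  "admissible E F \<longleftrightarrow>
     (\<forall>u v. E u v \<longleftrightarrow> E v u) \<and> (\<forall>u. \<not> E u u) \<and>
     (\<forall>u v. E u v \<longrightarrow>
        F u v = F v u \<and>
        (\<forall>t\<in>{-1..1}. F u v t \<in> {-1..1}) \<and>
        (\<exists>F'. (\<forall>t\<in>{-1..1}. (F u v has_real_derivative F' t) (at t within {-1..1}))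
              \<and> continuous_on {-1..1} F') \<and>
        F u v 0 = 0 \<and>
        mono_on {-1..1} (F u v) \<and>
        (\<forall>t\<in>{-1..1}. F u v (-t) = - F u v t))"

end

theory Submission
  imports Defs
begin

lemma adm_facts:
  assumes "admissible E F" "E u v"
  shows "E v u" "F u v = F v u" "\<And>t. t \<in> {-1..1} \<Longrightarrow> F u v t \<in> {-1..1}"
    "F u v 0 = 0" "mono_on {-1..1} (F u v)" "\<And>t. t\<in>{-1..1} \<Longrightarrow> F u v (-t) = - F u v t"
    "continuous_on {-1..1} (F u v)"
proof -
  show "E v u" "F u v = F v u" "\<And>t. t \<in> {-1..1} \<Longrightarrow> F u v t \<in> {-1..1}"
    "F u v 0 = 0" "mono_on {-1..1} (F u v)" "\<And>t. t\<in>{-1..1} \<Longrightarrow> F u v (-t) = - F u v t"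
    using assms unfolding admissible_def by meson+
  from assms obtain F' where "\<forall>t\<in>{-1..1}. (F u v has_real_derivative F' t) (at t within {-1..1})"
    unfolding admissible_def by blast
  then show "continuous_on {-1..1} (F u v)" by (intro DERIV_continuous_on) auto
qed

lemma adm_sym: "admissible E F \<Longrightarrow> E u v = E v u"
  unfolding admissible_def by blast

lemma simplex_facts:
  assumes "x \<in> std_simplex"
  shows "0 \<le> x v" "x v \<le> 1" "x u - x v \<in> {-1..1}"
proof -
  have nn: "\<And>w. 0 \<le> x w" and s: "(\<Sum>w\<in>UNIV. x w) = 1" using assms by (auto simp: std_simplex_def)
  have le: "\<And>w. x w \<le> 1"
  proof -
    fix w
    have "x w \<le> (\<Sum>w\<in>UNIV. x w)" by (rule member_le_sum) (auto simp: nn)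
    then show "x w \<le> 1" using s by simp
  qed
  show "0 \<le> x v" "x v \<le> 1" using nn le by auto
  show "x u - x v \<in> {-1..1}" using nn[of u] nn[of v] le[of u] le[of v] by auto
qed

lemma tF_nonneg:
  assumes "admissible E F" "E u v" "t \<in> {-1..1}"
  shows "t * F u v t \<ge> 0"
proof -
  have m: "mono_on {-1..1} (F u v)" and z: "F u v 0 = 0"
    using adm_facts(4,5)[OF assms(1,2)] by auto
  have t: "-1 \<le> t" "t \<le> 1" using assms(3) by auto
  have z1: "(0::real) \<in> {-1..1}" by simp
  show ?thesis
  proof (cases "t \<ge> 0")
    case True
    have "F u v 0 \<le> F u v t" by (rule mono_onD[OF m z1 assms(3) True])
    then show ?thesis using True z by simp
  next
    case False
    then have "t \<le> 0" by simp
    have "F u v t \<le> F u v 0" by (rule mono_onD[OF m assms(3) z1 \<open>t \<le> 0\<close>])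
    then show ?thesis using \<open>t \<le> 0\<close> z by (simp add: mult_nonpos_nonpos)
  qed
qed

lemma nbhd_sum_if:
  "(\<Sum>v\<in>nbhd E u. h v) = (\<Sum>v\<in>UNIV. if E u v then h v else (0::real))" for u :: "'v::finite"
  proof -
  have "(\<Sum>v\<in>UNIV. if E u v then h v else (0::real)) = sum h {v \<in> UNIV. E u v}"
    by (rule sum.inter_filter[symmetric]) simp
  then show ?thesis unfolding nbhd_def by simp
qed

lemma swap_sum:
  fixes h :: "'v::finite \<Rightarrow> 'v \<Rightarrow> real"
  assumes "\<And>u v. E u v = E v u"
  shows "2 * (\<Sum>u\<in>UNIV. \<Sum>v\<in>nbhd E u. h u v) = (\<Sum>u\<in>UNIV. \<Sum>v\<in>nbhd E u. h u v + h v u)"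
proof -
  have "(\<Sum>u\<in>UNIV. \<Sum>v\<in>nbhd E u. h u v) = (\<Sum>u\<in>UNIV. \<Sum>v\<in>UNIV. if E u v then h u v else 0)"
    by (simp add: nbhd_sum_if)
  also have "\<dots> = (\<Sum>v\<in>UNIV. \<Sum>u\<in>UNIV. if E u v then h u v else 0)" by (rule sum.swap)
  also have "\<dots> = (\<Sum>u\<in>UNIV. \<Sum>v\<in>UNIV. if E u v then h v u else 0)"
    by (intro sum.cong refl) (simp add: assms)
  also have "\<dots> = (\<Sum>u\<in>UNIV. \<Sum>v\<in>nbhd E u. h v u)"
    by (simp add: nbhd_sum_if)
  finally have "(\<Sum>u\<in>UNIV. \<Sum>v\<in>nbhd E u. h u v) = (\<Sum>u\<in>UNIV. \<Sum>v\<in>nbhd E u. h v u)" .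
  then show ?thesis by (simp add: sum.distrib)
qed


lemma sum_d_zero:
  assumes adm: "admissible E F" and x: "x \<in> std_simplex"
  shows "(\<Sum>u\<in>UNIV. \<Sum>v\<in>nbhd E u. x u * x v * F u v (x u - x v)) = 0"
proof -
  let ?k = "\<lambda>u v. x u * x v * F u v (x u - x v)"
  have "2 * (\<Sum>u\<in>UNIV. \<Sum>v\<in>nbhd E u. ?k u v) = (\<Sum>u\<in>UNIV. \<Sum>v\<in>nbhd E u. ?k u v + ?k v u)"
    by (rule swap_sum) (rule adm_sym[OF adm])
  also have "\<dots> = (\<Sum>u\<in>UNIV. \<Sum>v\<in>nbhd E u. 0)"
  proof (intro sum.cong refl)
    fix u v assume "v \<in> nbhd E u"
    then have e: "E u v" by (simp add: nbhd_def)
    have "F v u (x v - x u) = F u v (- (x u - x v))" using adm_facts(2)[OF adm e] by simp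
    also have "\<dots> = - F u v (x u - x v)"
      by (rule adm_facts(6)[OF adm e simplex_facts(3)[OF x]])
    finally show "?k u v + ?k v u = 0" by (simp add: algebra_simps)
  qed
  finally show ?thesis by simp
qed

lemma S_nonneg:
  assumes adm: "admissible E F" and x: "x \<in> std_simplex"
  shows "(\<Sum>u\<in>UNIV. x u * (\<Sum>v\<in>nbhd E u. x u * x v * F u v (x u - x v))) \<ge> 0"
proof -
  let ?h = "\<lambda>u v. x u * x u * x v * F u v (x u - x v)"
  have eq: "(\<Sum>u\<in>UNIV. x u * (\<Sum>v\<in>nbhd E u. x u * x v * F u v (x u - x v)))
      = (\<Sum>u\<in>UNIV. \<Sum>v\<in>nbhd E u. ?h u v)"
    by (simp add: sum_distrib_left mult.assoc)
  have "2 * (\<Sum>u\<in>UNIV. \<Sum>v\<in>nbhd E u. ?h u v) = (\<Sum>u\<in>UNIV. \<Sum>v\<in>nbhd E u. ?h u v + ?h v u)"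
    by (rule swap_sum) (rule adm_sym[OF adm])
  also have "\<dots> \<ge> 0"
  proof (intro sum_nonneg)
    fix u v assume "v \<in> nbhd E u"
    then have e: "E u v" by (simp add: nbhd_def)
    have "F v u (x v - x u) = F u v (- (x u - x v))" using adm_facts(2)[OF adm e] by simp
    also have "\<dots> = - F u v (x u - x v)"
      by (rule adm_facts(6)[OF adm e simplex_facts(3)[OF x]])
    finally have "?h u v + ?h v u = (x u * x v) * ((x u - x v) * F u v (x u - x v))"
      by (simp add: algebra_simps)
    also have "\<dots> \<ge> 0"
      using tF_nonneg[OF adm e simplex_facts(3)[OF x]] simplex_facts(1)[OF x, of u]
        simplex_facts(1)[OF x, of v] by simp
    finally show "?h u v + ?h v u \<ge> 0" .
  qed
  finally show ?thesis using eq by simp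
qed

lemma gmap_simplex:
  assumes adm: "admissible E F" and x: "x \<in> std_simplex"
  shows "gmap E F x \<in> std_simplex"
proof -
  have nn: "0 \<le> gmap E F x u" for u
  proof -
    have b: "\<bar>\<Sum>v\<in>nbhd E u. x v * F u v (x u - x v)\<bar> \<le> 1"
    proof -
      have "\<bar>\<Sum>v\<in>nbhd E u. x v * F u v (x u - x v)\<bar> \<le> (\<Sum>v\<in>nbhd E u. \<bar>x v * F u v (x u - x v)\<bar>)"
        by (rule sum_abs)
      also have "\<dots> \<le> (\<Sum>v\<in>nbhd E u. x v)"
      proof (intro sum_mono)
        fix v assume "v \<in> nbhd E u"
        then have e: "E u v" by (simp add: nbhd_def)
        have "\<bar>F u v (x u - x v)\<bar> \<le> 1"
          using adm_facts(3)[OF adm e simplex_facts(3)[OF x, where u=u and v=v]] by auto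
        then show "\<bar>x v * F u v (x u - x v)\<bar> \<le> x v"
          using simplex_facts(1)[OF x, of v] by (simp add: abs_mult mult_left_le)
      qed
      also have "\<dots> \<le> (\<Sum>v\<in>UNIV. x v)"
        by (rule sum_mono2) (auto simp: simplex_facts(1)[OF x])
      also have "\<dots> = 1" using x by (simp add: std_simplex_def)
      finally show ?thesis .
    qed
    have "gmap E F x u = x u * (1 + (\<Sum>v\<in>nbhd E u. x v * F u v (x u - x v)))"
      by (simp add: gmap_def algebra_simps sum_distrib_left)
    also have "\<dots> \<ge> 0" using b simplex_facts(1)[OF x, of u] by (intro mult_nonneg_nonneg) auto
    finally show ?thesis .
  qed
  have "(\<Sum>u\<in>UNIV. gmap E F x u) = (\<Sum>u\<in>UNIV. x u) + (\<Sum>u\<in>UNIV. \<Sum>v\<in>nbhd E u. x u * x v * F u v (x u - x v))"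
    by (simp add: gmap_def sum.distrib)
  also have "\<dots> = 1" using sum_d_zero[OF adm x] x by (simp add: std_simplex_def)
  finally show ?thesis using nn by (simp add: std_simplex_def)
qed

lemma part1:
  assumes adm: "admissible E F" and x: "x \<in> std_simplex"
  shows "Phi (gmap E F x) \<ge> Phi x \<and> (Phi (gmap E F x) = Phi x \<longrightarrow> gmap E F x = x)"
proof -
  define d where "d u = (\<Sum>v\<in>nbhd E u. x u * x v * F u v (x u - x v))" for u
  have g: "gmap E F x = (\<lambda>u. x u + d u)" by (simp add: gmap_def d_def fun_eq_iff)
  have P: "Phi (gmap E F x) = Phi x + 2 * (\<Sum>u\<in>UNIV. x u * d u) + (\<Sum>u\<in>UNIV. (d u)\<^sup>2)"
    unfolding g Phi_def by (simp add: power2_eq_square algebra_simps sum.distrib sum_distrib_left)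
  have S: "(\<Sum>u\<in>UNIV. x u * d u) \<ge> 0" unfolding d_def by (rule S_nonneg[OF adm x])
  have D: "(\<Sum>u\<in>UNIV. (d u)\<^sup>2) \<ge> 0" by (simp add: sum_nonneg)
  have "Phi (gmap E F x) = Phi x \<Longrightarrow> gmap E F x = x"
  proof -
    assume "Phi (gmap E F x) = Phi x"
    then have "(\<Sum>u\<in>UNIV. (d u)\<^sup>2) = 0" using P S D by linarith
    then have "\<forall>u\<in>UNIV. (d u)\<^sup>2 = 0" by (subst (asm) sum_nonneg_eq_0_iff) auto
    then show ?thesis unfolding g by (simp add: fun_eq_iff)
  qed
  then show ?thesis using P S D by linarith
qed

lemma Phi_le1:
  assumes x: "x \<in> std_simplex" shows "Phi x \<le> 1"
proof -
  have "Phi x \<le> (\<Sum>v\<in>UNIV. x v)" unfolding Phi_def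
  proof (intro sum_mono)
    fix v
    show "(x v)\<^sup>2 \<le> x v" using simplex_facts(1,2)[OF x, of v]
      by (simp add: power2_eq_square mult_left_le_one_le)
  qed
  then show ?thesis using x by (simp add: std_simplex_def)
qed

lemma gmap_cont:
  assumes adm: "admissible E F" and Y: "\<And>k. Y k \<in> std_simplex" and p: "p \<in> std_simplex"
    and lim: "\<And>v. (\<lambda>k. Y k v) \<longlonglongrightarrow> p v"
  shows "(\<lambda>k. gmap E F (Y k) u) \<longlonglongrightarrow> gmap E F p u"
  unfolding gmap_def
proof (intro tendsto_add lim tendsto_sum tendsto_mult)
  fix v assume "v \<in> nbhd E u"
  then have e: "E u v" by (simp add: nbhd_def)
  show "(\<lambda>k. F u v (Y k u - Y k v)) \<longlonglongrightarrow> F u v (p u - p v)"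
    by (rule continuous_on_tendsto_compose[OF adm_facts(7)[OF adm e]])
       (use simplex_facts(3)[OF p, where u=u and v=v] simplex_facts(3)[OF Y, where u=u and v=v]
         in \<open>auto intro!: tendsto_diff lim always_eventually\<close>)
qed

lemma Phi_cont:
  assumes "\<And>v. (\<lambda>k. Y k v) \<longlonglongrightarrow> p v"
  shows "(\<lambda>k. Phi (Y k)) \<longlonglongrightarrow> Phi p"
  unfolding Phi_def by (rule tendsto_sum, rule tendsto_power, rule assms)

theorem mainTheorem3:
  fixes E :: "'v::finite \<Rightarrow> 'v \<Rightarrow> bool"
    and F :: "'v \<Rightarrow> 'v \<Rightarrow> real \<Rightarrow> real"
  assumes "admissible E F"
  shows "(\<forall>x\<in>std_simplex. Phi (gmap E F x) \<ge> Phi x \<and>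
            (Phi (gmap E F x) = Phi x \<longrightarrow> gmap E F x = x))
       \<and> (\<forall>x0\<in>std_simplex. \<forall>p r. strict_mono r \<and>
            ((\<lambda>k. (gmap E F ^^ (r k)) x0) \<longlonglongrightarrow> p) \<longrightarrow> gmap E F p = p)"
proof (intro conjI)
  show "\<forall>x\<in>std_simplex. Phi (gmap E F x) \<ge> Phi x \<and>
            (Phi (gmap E F x) = Phi x \<longrightarrow> gmap E F x = x)"
    using part1[OF assms] by blast
next
  show "\<forall>x0\<in>std_simplex. \<forall>p r. strict_mono r \<and>
            ((\<lambda>k. (gmap E F ^^ (r k)) x0) \<longlonglongrightarrow> p) \<longrightarrow> gmap E F p = p"
  proof (intro ballI allI impI)
  fix x0 :: "'v \<Rightarrow> real" and p and r :: "nat \<Rightarrow> nat"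
  assume x0: "x0 \<in> std_simplex" and h: "strict_mono r \<and> ((\<lambda>k. (gmap E F ^^ (r k)) x0) \<longlonglongrightarrow> p)"
  define X where "X k = (gmap E F ^^ k) x0" for k
  have r: "strict_mono r" and lim: "(\<lambda>k. X (r k)) \<longlonglongrightarrow> p" using h by (auto simp: X_def)
  have XS: "X k \<in> std_simplex" for k
    by (induction k) (auto simp: X_def x0 gmap_simplex[OF assms])
  have Xsuc: "X (Suc k) = gmap E F (X k)" for k by (simp add: X_def)
  have inc: "incseq (\<lambda>k. Phi (X k))"
    by (rule incseq_SucI) (use part1[OF assms XS] Xsuc in auto)
  obtain L where L: "(\<lambda>k. Phi (X k)) \<longlonglongrightarrow> L"
    using incseq_convergent[OF inc, of 1] Phi_le1[OF XS] by blast
  have cc: "isCont (\<lambda>x::'v\<Rightarrow>real. x v) p" for v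
    using continuous_on_product_coordinates[of v] continuous_on_eq_continuous_at[of UNIV] by blast
  have limv: "(\<lambda>k. X (r k) v) \<longlonglongrightarrow> p v" for v
    by (rule isCont_tendsto_compose[OF cc lim])
  have pS: "p \<in> std_simplex"
  proof -
    have "0 \<le> p v" for v
      by (rule LIMSEQ_le_const[OF limv]) (use simplex_facts(1)[OF XS] in auto)
    moreover have "(\<lambda>k. \<Sum>v\<in>UNIV. X (r k) v) \<longlonglongrightarrow> (\<Sum>v\<in>UNIV. p v)"
      by (intro tendsto_sum limv)
    then have "(\<Sum>v\<in>UNIV. p v) = 1"
      using XS by (simp add: std_simplex_def LIMSEQ_const_iff)
    ultimately show ?thesis by (simp add: std_simplex_def)
  qed
  have l1: "(\<lambda>k. Phi (X (r k))) \<longlonglongrightarrow> L"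
    using LIMSEQ_subseq_LIMSEQ[OF L r] by (simp add: comp_def)
  have r2: "strict_mono (\<lambda>k. Suc (r k))" using r by (simp add: strict_mono_def)
  have l2: "(\<lambda>k. Phi (X (Suc (r k)))) \<longlonglongrightarrow> L"
    using LIMSEQ_subseq_LIMSEQ[OF L r2] by (simp add: comp_def)
  have "(\<lambda>k. Phi (X (r k))) \<longlonglongrightarrow> Phi p" by (rule Phi_cont[OF limv])
  then have e1: "Phi p = L" using l1 LIMSEQ_unique by blast
  have "(\<lambda>k. Phi (gmap E F (X (r k)))) \<longlonglongrightarrow> Phi (gmap E F p)"
    by (rule Phi_cont, rule gmap_cont[OF assms XS pS limv])
  then have e2: "Phi (gmap E F p) = L" using l2 LIMSEQ_unique Xsuc by fastforce
  show "gmap E F p = p" using part1[OF assms pS] e1 e2 by auto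
  qed
qed

end
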